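(* Let $N\ge 2$ and let $s_0,\dots,s_{N-1}$ be independent complex random variables with $\mathbb{E}[s_n]=0$, $\mathbb{E}[|s_n|^2]=1$ and kurtosis $\mu_{4,n}=\mathbb{E}[|s_n|^4]$ (finite). Let $P_0,\dots,P_{N-1}\ge 0$ be deterministic, $\mathbf P=\mathrm{diag}(\sqrt{P_0},\dots,\sqrt{P_{N-1}})$, $\mathbf s=[s_0,\dots,s_{N-1}]^T$, and $\mathbf x=\mathbf F_N^H\mathbf P\mathbf s$, where $\mathbf F_N$ is the unitary $N$-point DFT matrix, i.e. $x[t]=\frac{1}{\sqrt N}\sum_{n=0}^{N-1}\sqrt{P_n}\,s_n e^{j\frac{2\pi}{N}tn}$, $t=0,\dots,N-1$. For $k=0,\dots,N-1$ let $$\mathbf J_k=\begin{bmatrix}\mathbf 0_{(N-k)\times k} & \mathbf I_{N-k}\\ \mathbf I_k & \mathbf 0_{k\times(N-k)}\end{bmatrix}$$ be the $N\times N$ cyclic shift matrix and $r_k=\mathbf x^H\mathbf J_k\mathbf x$. Define the expected sidelobe level $\mathrm{ESL}=\frac{1}{N-1}\sum_{k=1}^{N-1}\mathbb{E}[|r_k|^2]$. Then $$\mathrm{ESL}=\frac{1}{N-1}\left(\sum_{n=0}^{N-1}\big[(N-1)\mu_{4,n}+1\big]P_n^2-\Big(\sum_{n=0}^{N-1}P_n\Big)^2\right).$$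
   Context: Here $\mathbf x$ is a single OFDM symbol with $N$ subcarriers, $s_n$ is the (random) data symbol on subcarrier $n$ drawn from some constellation, $P_n$ the power on subcarrier $n$, and $r_k$ the periodic autocorrelation of $\mathbf x$ at lag $k$. *)

theory Defs
  imports "HOL-Probability.Probability"
begin

definition ofdm_symbol :: "nat \<Rightarrow> (nat \<Rightarrow> real) \<Rightarrow> (nat \<Rightarrow> complex) \<Rightarrow> nat \<Rightarrow> complex" where
  "ofdm_symbol N P s t =
     complex_of_real (1 / sqrt (real N)) *
     (\<Sum>n<N. complex_of_real (sqrt (P n)) * s n *
        exp (2 * complex_of_real pi * \<i> * of_nat t * of_nat n / of_nat N))"

text \<open>Entry (i,j) (0-based) of the N x N cyclic shift matrix
  J_k = [[0_{(N-k) x k}, I_{N-k}], [I_k, 0_{k x (N-k)}]].\<close>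
definition cyc_shift :: "nat \<Rightarrow> nat \<Rightarrow> nat \<Rightarrow> nat \<Rightarrow> complex" where
  "cyc_shift N k i j =
     (if i < N - k then (if j = i + k then 1 else 0)
      else (if j + N = i + k then 1 else 0))"

definition acorr :: "nat \<Rightarrow> (nat \<Rightarrow> complex) \<Rightarrow> nat \<Rightarrow> complex" where
  "acorr N x k = (\<Sum>i<N. \<Sum>j<N. cnj (x i) * cyc_shift N k i j * x j)"

end

theory Submission imports Defs begin

definition ww :: "nat \<Rightarrow> complex" where
  "ww N = exp (2 * complex_of_real pi * \<i> / of_nat N)"

lemma exp_ww: "exp (2 * complex_of_real pi * \<i> * of_nat t * of_nat n / of_nat N) = ww N ^ (t*n)"
proof -
  have "2 * complex_of_real pi * \<i> * of_nat t * of_nat n / of_nat N = of_nat (t*n) * (2 * complex_of_real pi * \<i> / of_nat N)"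
    by simp
  then show ?thesis unfolding ww_def by (simp only: exp_of_nat_mult)
qed

lemma ww_N: "N > 0 \<Longrightarrow> ww N ^ N = 1"
proof -
  assume "N > 0"
  have "ww N ^ N = exp (of_nat N * (2 * complex_of_real pi * \<i> / of_nat N))"
    unfolding ww_def by (simp only: exp_of_nat_mult)
  also have "\<dots> = exp (2 * complex_of_real pi * \<i>)" using \<open>N > 0\<close> by simp
  finally show ?thesis by simp
qed

lemma ww_mod: "N > 0 \<Longrightarrow> ww N ^ a = ww N ^ (a mod N)"
proof -
  assume N: "N > 0"
  have "ww N ^ a = ww N ^ (a mod N + N * (a div N))" by simp
  also have "\<dots> = ww N ^ (a mod N) * (ww N ^ N) ^ (a div N)" by (simp only: power_add power_mult)
  finally show ?thesis using ww_N[OF N] by simp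
qed

lemma ww_cnj: "cnj (ww N) * ww N = 1"
proof -
  have "cnj (ww N) = exp (- (2 * complex_of_real pi * \<i> / of_nat N))"
    unfolding ww_def by (simp add: exp_cnj)
  then show ?thesis unfolding ww_def by (simp add: exp_minus)
qed

lemma geo:
  assumes "n < N" "m < N"
  shows "(\<Sum>i<N. (ww N ^ n * cnj (ww N) ^ m) ^ i) = (if n = m then of_nat N else 0)"
proof (cases "n = m")
  case True
  then have "ww N ^ n * cnj (ww N) ^ m = 1" by (metis power_mult_distrib ww_cnj mult.commute power_one)
  then show ?thesis using True by simp
next
  case False
  define z where "z = ww N ^ n * cnj (ww N) ^ m"
  have N: "N > 0" using assms by simp
  have zN: "z ^ N = 1" unfolding z_def
    by (simp add: power_mult_distrib ww_N[OF N] flip: power_mult complex_cnj_power) (simp add: mult.commute power_mult ww_N[OF N])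
  have zexp: "z = exp (complex_of_real (2 * pi * (real n - real m) / real N) * \<i>)"
  proof -
    have "ww N ^ n = exp (of_nat n * (2 * complex_of_real pi * \<i> / of_nat N))"
      unfolding ww_def by (simp only: exp_of_nat_mult)
    moreover have "cnj (ww N) ^ m = exp (of_nat m * (- (2 * complex_of_real pi * \<i> / of_nat N)))"
      unfolding ww_def by (simp only: exp_of_nat_mult exp_cnj) simp
    moreover have "of_nat n * (2 * complex_of_real pi * \<i> / of_nat N) + of_nat m * (- (2 * complex_of_real pi * \<i> / of_nat N))
        = complex_of_real (2 * pi * (real n - real m) / real N) * \<i>"
      by (simp add: diff_divide_distrib[symmetric] algebra_simps)
    ultimately show ?thesis unfolding z_def
      by (metis exp_add)
  qed
  have "z \<noteq> 1"
  proof
    assume "z = 1"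
    then obtain q :: int where q: "2 * pi * (real n - real m) / real N = of_int (2 * q) * pi"
      unfolding zexp exp_eq_1 by auto
    then have "pi * (2*(real n - real m) - 2*(of_int q * real N)) = 0" using N by (simp add: field_simps)
    then have "2*(real n - real m) - 2*(of_int q * real N) = 0" by simp
    then have "real n - real m = of_int q * real N" by simp
    then have "real_of_int (int n - int m) = real_of_int (q * int N)" by simp
    then have "int n - int m = q * int N" by (simp only: of_int_eq_iff)
    moreover have "\<bar>int n - int m\<bar> < int N" using assms by auto
    ultimately have "\<bar>q\<bar> * int N < 1 * int N" by (simp add: abs_mult)
    then have "\<bar>q\<bar> < 1" using N by (simp only: mult_less_cancel_right)
    then have "q = 0" by simp
    then show False using \<open>int n - int m = q * int N\<close> False by simp
  qed
  then show ?thesis using zN False by (simp add: sum_gp_strict z_def[symmetric])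
qed

lemma shift_sum:
  assumes "i < N" "k < N"
  shows "(\<Sum>j<N. cyc_shift N k i j * x j) = x ((i+k) mod N)"
proof -
  have "(\<Sum>j<N. cyc_shift N k i j * x j) = (\<Sum>j<N. if j = (i+k) mod N then x j else 0)"
  proof (rule sum.cong)
    fix j assume "j \<in> {..<N}"
    show "cyc_shift N k i j * x j = (if j = (i+k) mod N then x j else 0)"
    proof (cases "i < N - k")
      case True
      then have "(i+k) mod N = i+k" by simp
      then show ?thesis using True by (simp add: cyc_shift_def)
    next
      case False
      then have "(i+k) mod N = i+k-N" using assms by (simp add: mod_if)
      then show ?thesis using False assms by (auto simp: cyc_shift_def)
    qed
  qed simp
  also have "\<dots> = x ((i+k) mod N)" using assms by simp
  finally show ?thesis .
qed

lemma acorr_eq: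
  assumes "k < N"
  shows "acorr N x k = (\<Sum>i<N. cnj (x i) * x ((i+k) mod N))"
  unfolding acorr_def
proof (rule sum.cong)
  fix i assume "i \<in> {..<N}"
  then have "(\<Sum>j<N. cnj (x i) * cyc_shift N k i j * x j) = cnj (x i) * (\<Sum>j<N. cyc_shift N k i j * x j)"
    by (simp add: sum_distrib_left mult.assoc)
  then show "(\<Sum>j<N. cnj (x i) * cyc_shift N k i j * x j) = cnj (x i) * x ((i+k) mod N)"
    using shift_sum[of i N k x] assms \<open>i \<in> {..<N}\<close> by simp
qed simp

lemma ofdm_eq: "ofdm_symbol N P s t = complex_of_real (1 / sqrt (real N)) *
   (\<Sum>n<N. complex_of_real (sqrt (P n)) * s n * ww N ^ (t*n))"
  by (simp add: ofdm_symbol_def exp_ww)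

lemma main_alg:
  assumes N: "N > 0" and k: "k < N" and P: "\<And>n. n < N \<Longrightarrow> P n \<ge> 0"
  shows "acorr N (ofdm_symbol N P s) k = (\<Sum>n<N. complex_of_real (P n * (cmod (s n))^2) * (ww N ^ n)^k)"
proof -
  define a where "a n = complex_of_real (sqrt (P n)) * s n" for n
  define c where "c = complex_of_real (1 / sqrt (real N))"
  define w where "w = ww N"
  have x: "ofdm_symbol N P s t = c * (\<Sum>n<N. a n * w ^ (t*n))" for t
    unfolding ofdm_eq a_def c_def w_def ..
  have wm: "w ^ (((i+k) mod N) * m) = w ^ ((i+k)*m)" for i m
  proof -
    have "w ^ (((i+k) mod N) * m) = w ^ ((((i+k) mod N) * m) mod N)" unfolding w_def by (rule ww_mod[OF N])
    also have "\<dots> = w^(((i+k)*m) mod N)" by (simp add: mod_mult_left_eq)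
    also have "\<dots> = w^((i+k)*m)" unfolding w_def by (rule ww_mod[OF N, symmetric])
    finally show ?thesis .
  qed
  have e1: "cnj (ofdm_symbol N P s i) * ofdm_symbol N P s ((i+k) mod N)
     = c*c * (\<Sum>n<N. \<Sum>m<N. (cnj (a n) * a m * (w ^ m)^k) * (w ^ m * cnj w ^ n)^i)" for i
  proof -
    have "cnj (ofdm_symbol N P s i) = c * (\<Sum>n<N. cnj (a n) * cnj w ^ (i*n))"
      unfolding x c_def by (simp add: cnj_sum)
    moreover have "ofdm_symbol N P s ((i+k) mod N) = c * (\<Sum>m<N. a m * w ^ ((i+k)*m))"
      unfolding x wm ..
    ultimately have "cnj (ofdm_symbol N P s i) * ofdm_symbol N P s ((i+k) mod N)
       = c*c * ((\<Sum>n<N. cnj (a n) * cnj w ^ (i*n)) * (\<Sum>m<N. a m * w ^ ((i+k)*m)))"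
      by simp
    also have "\<dots> = c*c * (\<Sum>n<N. \<Sum>m<N. (cnj (a n) * cnj w ^ (i*n)) * (a m * w ^ ((i+k)*m)))"
      by (simp add: sum_product)
    also have "\<dots> = c*c * (\<Sum>n<N. \<Sum>m<N. (cnj (a n) * a m * (w ^ m)^k) * (w ^ m * cnj w ^ n)^i)"
    proof (intro arg_cong[where f="\<lambda>x. c*c*x"] sum.cong refl)
      fix n m
      have "(i+k)*m = m*i + m*k" by (simp add: algebra_simps)
      then have h1: "w ^ ((i+k)*m) = (w^m)^i * (w^m)^k" by (simp only: power_add power_mult)
      have "i*n = n*i" by simp
      then have h2: "cnj w ^ (i*n) = (cnj w ^ n)^i" by (simp only: power_mult)
      have h3: "(w ^ m * cnj w ^ n)^i = (w^m)^i * (cnj w ^ n)^i" by (rule power_mult_distrib)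
      show "cnj (a n) * cnj w ^ (i * n) * (a m * w ^ ((i + k) * m)) =
          cnj (a n) * a m * (w ^ m) ^ k * (w ^ m * cnj w ^ n) ^ i"
        unfolding h1 h2 h3 by algebra
    qed
    finally show ?thesis .
  qed
  have "acorr N (ofdm_symbol N P s) k = (\<Sum>i<N. c*c * (\<Sum>n<N. \<Sum>m<N. (cnj (a n) * a m * (w ^ m)^k) * (w ^ m * cnj w ^ n)^i))"
    unfolding acorr_eq[OF k] e1 ..
  also have "\<dots> = c*c * (\<Sum>n<N. \<Sum>m<N. (cnj (a n) * a m * (w ^ m)^k) * (\<Sum>i<N. (w ^ m * cnj w ^ n)^i))"
  proof -
    have "(\<Sum>i<N. c*c * (\<Sum>n<N. \<Sum>m<N. (cnj (a n) * a m * (w ^ m)^k) * (w ^ m * cnj w ^ n)^i))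
      = c*c * (\<Sum>i<N. \<Sum>n<N. \<Sum>m<N. (cnj (a n) * a m * (w ^ m)^k) * (w ^ m * cnj w ^ n)^i)"
      by (simp only: sum_distrib_left)
    also have "\<dots> = c*c * (\<Sum>n<N. \<Sum>i<N. \<Sum>m<N. (cnj (a n) * a m * (w ^ m)^k) * (w ^ m * cnj w ^ n)^i)"
      by (rule arg_cong[where f="\<lambda>x. c*c*x"], rule sum.swap)
    also have "\<dots> = c*c * (\<Sum>n<N. \<Sum>m<N. \<Sum>i<N. (cnj (a n) * a m * (w ^ m)^k) * (w ^ m * cnj w ^ n)^i)"
      by (rule arg_cong[where f="\<lambda>x. c*c*x"], rule sum.cong[OF refl], rule sum.swap)
    also have "\<dots> = c*c * (\<Sum>n<N. \<Sum>m<N. (cnj (a n) * a m * (w ^ m)^k) * (\<Sum>i<N. (w ^ m * cnj w ^ n)^i))"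
      by (simp only: sum_distrib_left)
    finally show ?thesis .
  qed
  also have "\<dots> = c*c * (\<Sum>n<N. \<Sum>m<N. (cnj (a n) * a m * (w ^ m)^k) * (if m = n then of_nat N else 0))"
    unfolding w_def by (intro arg_cong[where f="\<lambda>x. c*c*x"] sum.cong refl) (simp add: geo)
  also have "\<dots> = (\<Sum>n<N. (c * c * of_nat N) * (cnj (a n) * a n) * (w ^ n)^k)"
  proof -
    have "(\<Sum>m<N. (cnj (a n) * a m * (w ^ m)^k) * (if m = n then of_nat N else 0))
        = cnj (a n) * a n * (w ^ n)^k * of_nat N" if "n < N" for n
    proof -
      have "(\<Sum>m<N. (cnj (a n) * a m * (w ^ m)^k) * (if m = n then of_nat N else 0))
         = (\<Sum>m<N. if m = n then cnj (a n) * a m * (w ^ m)^k * of_nat N else 0)"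
        by (rule sum.cong) auto
      also have "\<dots> = cnj (a n) * a n * (w ^ n)^k * of_nat N" using that by (simp add: sum.delta)
      finally show ?thesis .
    qed
    then have "c*c * (\<Sum>n<N. \<Sum>m<N. (cnj (a n) * a m * (w ^ m)^k) * (if m = n then of_nat N else 0))
       = c*c * (\<Sum>n<N. cnj (a n) * a n * (w ^ n)^k * of_nat N)" by simp
    also have "\<dots> = (\<Sum>n<N. (c * c * of_nat N) * (cnj (a n) * a n) * (w ^ n)^k)"
      by (simp only: sum_distrib_left) (rule sum.cong, simp_all only: ac_simps)
    finally show ?thesis .
  qed
  also have "\<dots> = (\<Sum>n<N. complex_of_real (P n * (cmod (s n))^2) * (ww N ^ n)^k)"
  proof (rule sum.cong)
    fix n assume "n \<in> {..<N}"
    then have "P n \<ge> 0" using P by simp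
    have cc: "c * c * of_nat N = 1"
    proof -
      have "c * c * of_nat N = complex_of_real (1 / sqrt (real N) * (1 / sqrt (real N)) * real N)"
        unfolding c_def by (simp only: of_real_mult of_real_of_nat_eq)
      also have "1 / sqrt (real N) * (1 / sqrt (real N)) * real N = 1" using N
        by (simp add: power_divide flip: power2_eq_square)
      finally show ?thesis by simp
    qed
    have "cnj (a n) * a n = complex_of_real (P n * (cmod (s n))^2)"
    proof -
      have "cnj (a n) * a n = complex_of_real (P n) * (s n * cnj (s n))"
        unfolding a_def using \<open>P n \<ge> 0\<close> by (simp add: ac_simps flip: of_real_mult)
      also have "\<dots> = complex_of_real (P n) * complex_of_real ((cmod (s n))^2)"
        by (simp only: complex_norm_square)
      finally show ?thesis by simp
    qed
    then show "(c * c * of_nat N) * (cnj (a n) * a n) * (w ^ n)^k = complex_of_real (P n * (cmod (s n))^2) * (ww N ^ n)^k"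
      using cc w_def by simp
  qed simp
  finally show ?thesis .
qed

lemma cmod_sq:
  fixes b :: "nat \<Rightarrow> real" and z :: "nat \<Rightarrow> complex"
  shows "(cmod (\<Sum>n<N. complex_of_real (b n) * z n ^ k))^2
     = (\<Sum>n<N. \<Sum>m<N. b n * b m * Re ((z n * cnj (z m)) ^ k))"
proof -
  let ?r = "\<Sum>n<N. complex_of_real (b n) * z n ^ k"
  have "complex_of_real ((cmod ?r)^2) = ?r * cnj ?r" by (rule complex_norm_square)
  also have "\<dots> = (\<Sum>n<N. \<Sum>m<N. (complex_of_real (b n) * z n ^ k) * cnj (complex_of_real (b m) * z m ^ k))"
    by (simp add: cnj_sum sum_product)
  also have "\<dots> = (\<Sum>n<N. \<Sum>m<N. complex_of_real (b n * b m) * (z n * cnj (z m)) ^ k)"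
    by (intro sum.cong refl) (simp add: power_mult_distrib ac_simps)
  finally have "complex_of_real ((cmod ?r)^2) = (\<Sum>n<N. \<Sum>m<N. complex_of_real (b n * b m) * (z n * cnj (z m)) ^ k)" .
  then have "Re (complex_of_real ((cmod ?r)^2)) = Re (\<Sum>n<N. \<Sum>m<N. complex_of_real (b n * b m) * (z n * cnj (z m)) ^ k)"
    by simp
  then show ?thesis by (simp add: Re_sum)
qed

lemma geo_re:
  assumes "n < N" "m < N"
  shows "(\<Sum>k\<in>{1..N-1}. Re ((ww N ^ n * cnj (ww N ^ m)) ^ k)) = (if n = m then real N else 0) - 1"
proof -
  have N: "N > 0" using assms by simp
  have U: "{..<N} = insert 0 {1..N-1}" using N by auto
  have "(\<Sum>k<N. Re ((ww N ^ n * cnj (ww N ^ m)) ^ k)) = Re (\<Sum>k<N. (ww N ^ n * cnj (ww N) ^ m) ^ k)"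
    by (simp add: Re_sum complex_cnj_power)
  also have "\<dots> = (if n = m then real N else 0)" using geo[OF assms] by simp
  finally show ?thesis unfolding U by simp
qed

lemma prod_le_sq: "0 \<le> (a::real) \<Longrightarrow> 0 \<le> b \<Longrightarrow> a * b \<le> a^2 + b^2"
proof -
  assume "0 \<le> a" "0 \<le> b"
  have "0 \<le> (a - b)^2" by simp
  then have "2 * a * b \<le> a^2 + b^2" by (simp add: power2_diff)
  moreover have "0 \<le> a * b" using \<open>0 \<le> a\<close> \<open>0 \<le> b\<close> by simp
  ultimately show ?thesis by linarith
qed

theorem proposition1:
  fixes M :: "'a measure" and N :: nat
    and s :: "nat \<Rightarrow> 'a \<Rightarrow> complex" and P :: "nat \<Rightarrow> real"
  assumes "prob_space M"
    and "N \<ge> 2"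
    and "prob_space.indep_vars M (\<lambda>_. borel) s {..<N}"
    and "\<And>n. n < N \<Longrightarrow> integrable M (\<lambda>\<omega>. (cmod (s n \<omega>)) ^ 4)"
    and "\<And>n. n < N \<Longrightarrow> integral\<^sup>L M (s n) = 0"
    and "\<And>n. n < N \<Longrightarrow> integral\<^sup>L M (\<lambda>\<omega>. (cmod (s n \<omega>))\<^sup>2) = 1"
    and "\<And>n. n < N \<Longrightarrow> P n \<ge> 0"
  shows "(1 / (real N - 1)) *
           (\<Sum>k\<in>{1..N-1}. integral\<^sup>L M
              (\<lambda>\<omega>. (cmod (acorr N (ofdm_symbol N P (\<lambda>n. s n \<omega>)) k))\<^sup>2))
         = (1 / (real N - 1)) *
           ((\<Sum>n<N. ((real N - 1) * integral\<^sup>L M (\<lambda>\<omega>. (cmod (s n \<omega>)) ^ 4) + 1) * (P n)\<^sup>2)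
             - (\<Sum>n<N. P n)\<^sup>2)"
proof -
  interpret prob_space M by fact
  have N: "N > 0" using assms(2) by simp
  have indep: "indep_vars (\<lambda>_. borel) s {..<N}" using assms(3) .
  have rv: "s n \<in> borel_measurable M" if "n < N" for n
    using indep that unfolding indep_vars_def by auto
  define X where "X n \<omega> = (cmod (s n \<omega>))^2" for n \<omega>
  have Xm: "X n \<in> borel_measurable M" if "n < N" for n
    unfolding X_def using rv[OF that] by measurable
  have X0: "X n \<omega> \<ge> 0" for n \<omega> unfolding X_def by simp
  have X4: "X n \<omega> ^ 2 = (cmod (s n \<omega>))^4" for n \<omega> unfolding X_def by simp
  have intXX: "integrable M (\<lambda>\<omega>. X n \<omega> * X m \<omega>)" if "n < N" "m < N" for n m
  proof (rule Bochner_Integration.integrable_bound[where f="\<lambda>\<omega>. (cmod (s n \<omega>))^4 + (cmod (s m \<omega>))^4"])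
    show "integrable M (\<lambda>\<omega>. (cmod (s n \<omega>))^4 + (cmod (s m \<omega>))^4)"
      using assms(4) that by auto
    show "(\<lambda>\<omega>. X n \<omega> * X m \<omega>) \<in> borel_measurable M" using Xm that by measurable
    show "AE \<omega> in M. norm (X n \<omega> * X m \<omega>) \<le> norm ((cmod (s n \<omega>))^4 + (cmod (s m \<omega>))^4)"
      using prod_le_sq[OF X0 X0] X0 by (auto simp: X4[symmetric])
  qed
  have intX: "integrable M (X n)" if "n < N" for n
  proof (rule Bochner_Integration.integrable_bound[where f="\<lambda>\<omega>. 1 + (cmod (s n \<omega>))^4"])
    show "integrable M (\<lambda>\<omega>. 1 + (cmod (s n \<omega>))^4)"
      using assms(4) that by auto
    show "X n \<in> borel_measurable M" using Xm that by simp
    show "AE \<omega> in M. norm (X n \<omega>) \<le> norm (1 + (cmod (s n \<omega>))^4)"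
    proof (rule AE_I2)
      fix \<omega>
      have "X n \<omega> * 1 \<le> X n \<omega>^2 + 1^2" by (rule prod_le_sq[OF X0]) simp
      then show "norm (X n \<omega>) \<le> norm (1 + (cmod (s n \<omega>))^4)" using X0[of n \<omega>] by (simp add: X4)
    qed
  qed
  define E where "E n m = integral\<^sup>L M (\<lambda>\<omega>. X n \<omega> * X m \<omega>)" for n m
  have EX: "E n m = (if n = m then integral\<^sup>L M (\<lambda>\<omega>. (cmod (s n \<omega>)) ^ 4) else 1)"
    if "n < N" "m < N" for n m
  proof (cases "n = m")
    case True
    then show ?thesis unfolding E_def by (simp add: X4[symmetric] power2_eq_square)
  next
    case False
    have iX: "indep_vars (\<lambda>_. borel) X {..<N}"
      unfolding X_def by (rule indep_vars_compose2[OF indep, where Y="\<lambda>_ z. (cmod z)^2"]) measurable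
    then have iX2: "indep_vars (\<lambda>_. borel) X {n, m}"
      by (rule indep_vars_subset) (use that in auto)
    have "integral\<^sup>L M (\<lambda>\<omega>. \<Prod>i\<in>{n,m}. X i \<omega>) = (\<Prod>i\<in>{n,m}. integral\<^sup>L M (X i))"
      by (rule indep_vars_lebesgue_integral[OF _ iX2]) (use that intX in auto)
    moreover have "integral\<^sup>L M (X i) = 1" if "i < N" for i
      using assms(6)[OF that] unfolding X_def by simp
    ultimately show ?thesis using False that unfolding E_def by simp
  qed
  define C where "C k n m = Re ((ww N ^ n * cnj (ww N ^ m)) ^ k)" for k n m
  have intk: "integral\<^sup>L M (\<lambda>\<omega>. (cmod (acorr N (ofdm_symbol N P (\<lambda>n. s n \<omega>)) k))\<^sup>2)
     = (\<Sum>n<N. \<Sum>m<N. (P n * P m * C k n m) * E n m)" if "k < N" for k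
  proof -
    have "integral\<^sup>L M (\<lambda>\<omega>. (cmod (acorr N (ofdm_symbol N P (\<lambda>n. s n \<omega>)) k))\<^sup>2)
       = integral\<^sup>L M (\<lambda>\<omega>. \<Sum>n<N. \<Sum>m<N. (P n * P m * C k n m) * (X n \<omega> * X m \<omega>))"
    proof (rule Bochner_Integration.integral_cong[OF refl])
      fix \<omega>
      have "acorr N (ofdm_symbol N P (\<lambda>n. s n \<omega>)) k
         = (\<Sum>n<N. complex_of_real (P n * X n \<omega>) * (ww N ^ n)^k)"
        unfolding X_def by (rule main_alg[OF N that assms(7)])
      then show "(cmod (acorr N (ofdm_symbol N P (\<lambda>n. s n \<omega>)) k))\<^sup>2
         = (\<Sum>n<N. \<Sum>m<N. (P n * P m * C k n m) * (X n \<omega> * X m \<omega>))"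
        unfolding C_def by (simp only: cmod_sq) (intro sum.cong refl, simp only: ac_simps)
    qed
    also have "\<dots> = (\<Sum>n<N. \<Sum>m<N. (P n * P m * C k n m) * E n m)"
    proof -
      have ii: "integrable M (\<lambda>\<omega>. (P n * P m * C k n m) * (X n \<omega> * X m \<omega>))" if "n < N" "m < N" for n m
        using intXX[OF that] by (rule Bochner_Integration.integrable_mult_right)
      have "integral\<^sup>L M (\<lambda>\<omega>. \<Sum>n<N. \<Sum>m<N. (P n * P m * C k n m) * (X n \<omega> * X m \<omega>))
          = (\<Sum>n<N. integral\<^sup>L M (\<lambda>\<omega>. \<Sum>m<N. (P n * P m * C k n m) * (X n \<omega> * X m \<omega>)))"
        by (rule Bochner_Integration.integral_sum) (use ii in auto)
      also have "\<dots> = (\<Sum>n<N. \<Sum>m<N. integral\<^sup>L M (\<lambda>\<omega>. (P n * P m * C k n m) * (X n \<omega> * X m \<omega>)))"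
        by (intro sum.cong refl Bochner_Integration.integral_sum) (use ii in auto)
      also have "\<dots> = (\<Sum>n<N. \<Sum>m<N. (P n * P m * C k n m) * E n m)"
        unfolding E_def by (intro sum.cong refl Bochner_Integration.integral_mult_right_zero)
      finally show ?thesis .
    qed
    finally show ?thesis .
  qed
  have "(\<Sum>k\<in>{1..N-1}. integral\<^sup>L M
              (\<lambda>\<omega>. (cmod (acorr N (ofdm_symbol N P (\<lambda>n. s n \<omega>)) k))\<^sup>2))
     = (\<Sum>k\<in>{1..N-1}. \<Sum>n<N. \<Sum>m<N. (P n * P m * C k n m) * E n m)"
    by (rule sum.cong[OF refl]) (use intk in auto)
  also have "\<dots> = (\<Sum>n<N. \<Sum>k\<in>{1..N-1}. \<Sum>m<N. (P n * P m * C k n m) * E n m)"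
    by (rule sum.swap)
  also have "\<dots> = (\<Sum>n<N. \<Sum>m<N. \<Sum>k\<in>{1..N-1}. (P n * P m * C k n m) * E n m)"
    by (rule sum.cong[OF refl], rule sum.swap)
  also have "\<dots> = (\<Sum>n<N. \<Sum>m<N. P n * P m * E n m * (\<Sum>k\<in>{1..N-1}. C k n m))"
    by (simp add: sum_distrib_left ac_simps)
  also have "\<dots> = (\<Sum>n<N. \<Sum>m<N. P n * P m * E n m * ((if n = m then real N else 0) - 1))"
    unfolding C_def by (intro sum.cong refl) (simp only: lessThan_iff geo_re)
  also have "\<dots> = (\<Sum>n<N. \<Sum>m<N. (if n = m then ((real N - 1) * integral\<^sup>L M (\<lambda>\<omega>. (cmod (s n \<omega>)) ^ 4) + 1) * (P n)\<^sup>2 else 0) - P n * P m)"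
    by (intro sum.cong refl) (simp add: EX power2_eq_square algebra_simps)
  also have "\<dots> = (\<Sum>n<N. ((real N - 1) * integral\<^sup>L M (\<lambda>\<omega>. (cmod (s n \<omega>)) ^ 4) + 1) * (P n)\<^sup>2)
             - (\<Sum>n<N. P n)\<^sup>2"
  proof -
    define g where "g n = ((real N - 1) * integral\<^sup>L M (\<lambda>\<omega>. (cmod (s n \<omega>)) ^ 4) + 1) * (P n)\<^sup>2" for n
    have "(\<Sum>n<N. \<Sum>m<N. (if n = m then g n else 0) - P n * P m)
        = (\<Sum>n<N. \<Sum>m<N. (if n = m then g n else 0)) - (\<Sum>n<N. \<Sum>m<N. P n * P m)"
      by (simp only: sum_subtractf)
    also have "(\<Sum>n<N. \<Sum>m<N. (if n = m then g n else 0)) = (\<Sum>n<N. g n)"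
      by (intro sum.cong refl) simp
    also have "(\<Sum>n<N. \<Sum>m<N. P n * P m) = (\<Sum>n<N. P n)\<^sup>2"
      by (simp only: power2_eq_square sum_product)
    finally show ?thesis unfolding g_def .
  qed
  finally show ?thesis by simp
qed

end
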